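(* Let $\mathbf{A}=(A_1,\ldots,A_n)$ be a POVM on $\mathbb{C}^d$ that is $\mathcal{U}$-simulable, where $\mathcal{U}$ is the set of unbiased 2-outcome POVMs on $\mathbb{C}^d$. Then every antipodal operator $\bar A_i$ is positive semidefinite, $\bar{\mathbf{A}}=(\bar A_1,\ldots,\bar A_n)$ is a POVM, and the pair $\{\mathbf{A},\bar{\mathbf{A}}\}$ is jointly measurable.
   Context: A POVM on $\mathbb{C}^d$ with $n$ outcomes is a tuple $\mathbf{A}=(A_1,\ldots,A_n)$ of positive semidefinite operators with $\sum_a A_a=\mathbb{I}$ (some effects may be zero). Given a set $\mathcal{B}=\{\mathbf{B}^{(j)}\}_j$ of POVMs, a POVM $\mathbf{A}$ with $n$ outcomes is $\mathcal{B}$-simulable if there are a probability distribution $p(j)$ over (finitely many) elements of $\mathcal{B}$ and conditional probability distributions $q(i|j,i')$ (over $i\in\{1,\ldots,n\}$, for each $j$ and each outcome $i'$ of $\mathbf{B}^{(j)}$) such that $A_i=\sum_j p(j)\sum_{i'}q(i|j,i')B^{(j)}_{i'}$ for all $i$. Every Hermitian operator on $\mathbb{C}^d$ can be written uniquely as $A=a\mathbb{I}+\vec v\cdot\vec\lambda$ with $a\in\mathbb{R}$, $\vec v\in\mathbb{R}^{d^2-1}$, where $\vec\lambda=(\lambda_1,\ldots,\lambda_{d^2-1})$ is a fixed tuple of traceless Hermitian operators which together with $\mathbb{I}$ form a basis of the real space of Hermitian operators (e.g. Pauli matrices for $d=2$); here $a=\mathrm{Tr}(A)/d$. The antipodal operator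 of $A$ is $\bar A=a\mathbb{I}-\vec v\cdot\vec\lambda=\frac{2\mathrm{Tr}(A)}{d}\mathbb{I}-A$. A 2-outcome POVM is unbiased if it has the form $(\tfrac12\mathbb{I}+\vec v\cdot\vec\lambda,\ \tfrac12\mathbb{I}-\vec v\cdot\vec\lambda)$. A pair of POVMs $\mathbf{A}$ ($n_1$ outcomes), $\mathbf{A}'$ ($n_2$ outcomes) is jointly measurable if there is a POVM $(M_{ab})$ with $\sum_b M_{ab}=A_a$ and $\sum_a M_{ab}=A'_b$ for all $a,b$. *)

theory Defs
  imports "HOL-Analysis.Analysis"
begin

text \<open>Operators on C^d are represented as matrices of type complex^'d^'d with d = CARD('d).
  POVMs with n outcomes are functions from outcome indices to operators, the outcomes
  being indexed by 0..<n (values at indices >= n are irrelevant).\<close>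

type_synonym 'd op = "complex^'d^'d"

definition hermitian :: "'d::finite op \<Rightarrow> bool" where
  "hermitian A \<longleftrightarrow> (\<forall>i j. A$i$j = cnj (A$j$i))"

definition psd :: "'d::finite op \<Rightarrow> bool" where
  "psd A \<longleftrightarrow> hermitian A \<and>
     (\<forall>x::complex^'d. 0 \<le> Re (\<Sum>i\<in>UNIV. \<Sum>j\<in>UNIV. cnj (x$i) * A$i$j * x$j))"

definition povm :: "nat \<Rightarrow> (nat \<Rightarrow> 'd::finite op) \<Rightarrow> bool" where
  "povm n A \<longleftrightarrow> (\<forall>a<n. psd (A a)) \<and> (\<Sum>a<n. A a) = mat 1"

definition antipodal :: "'d::finite op \<Rightarrow> 'd op" where
  "antipodal A = mat (2 * trace A / of_nat CARD('d)) - A"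

text \<open>Unbiased 2-outcome POVM (1/2 I + v.lambda, 1/2 I - v.lambda): v.lambda ranges exactly
  over the traceless Hermitian operators.\<close>
definition unbiased :: "(nat \<Rightarrow> 'd::finite op) \<Rightarrow> bool" where
  "unbiased B \<longleftrightarrow> povm 2 B \<and>
     (\<exists>V. hermitian V \<and> trace V = 0 \<and> B 0 = mat (1/2) + V \<and> B 1 = mat (1/2) - V)"

definition unbiased_povms :: "(nat \<times> (nat \<Rightarrow> 'd::finite op)) set" where
  "unbiased_povms = {(2, B) | B. unbiased B}"

text \<open>B-simulability: finitely many elements B^(j) (j < m) of the set, a probability
  distribution p over them and conditional distributions q j i' i = q(i|j,i').\<close>
definition simulable :: "(nat \<times> (nat \<Rightarrow> 'd::finite op)) set \<Rightarrow> nat \<Rightarrow> (nat \<Rightarrow> 'd op) \<Rightarrow> bool" where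
  "simulable \<B> n A \<longleftrightarrow>
     (\<exists>(m::nat) (p::nat \<Rightarrow> real) (N::nat \<Rightarrow> nat) (B::nat \<Rightarrow> nat \<Rightarrow> 'd op)
        (q::nat \<Rightarrow> nat \<Rightarrow> nat \<Rightarrow> real).
        (\<forall>j<m. (N j, B j) \<in> \<B>) \<and>
        (\<forall>j<m. 0 \<le> p j) \<and> (\<Sum>j<m. p j) = 1 \<and>
        (\<forall>j<m. \<forall>i'<N j. (\<forall>i<n. 0 \<le> q j i' i) \<and> (\<Sum>i<n. q j i' i) = 1) \<and>
        (\<forall>i<n. A i = (\<Sum>j<m. p j *\<^sub>R (\<Sum>i'<N j. q j i' i *\<^sub>R B j i'))))"

definition jointly_measurable ::
  "nat \<Rightarrow> (nat \<Rightarrow> 'd::finite op) \<Rightarrow> nat \<Rightarrow> (nat \<Rightarrow> 'd op) \<Rightarrow> bool" where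
  "jointly_measurable n1 A n2 A' \<longleftrightarrow>
     (\<exists>M::nat \<Rightarrow> nat \<Rightarrow> 'd op.
        (\<forall>a<n1. \<forall>b<n2. psd (M a b)) \<and> (\<Sum>a<n1. \<Sum>b<n2. M a b) = mat 1 \<and>
        (\<forall>a<n1. (\<Sum>b<n2. M a b) = A a) \<and>
        (\<forall>b<n2. (\<Sum>a<n1. M a b) = A' b))"

end

theory Submission
  imports Defs
begin

lemma psd_add: assumes "psd (X::'d::finite op)" "psd Y" shows "psd (X + Y)"
proof -
  have hX: "hermitian X" and hY: "hermitian Y" using assms unfolding psd_def by blast+
  have h: "hermitian (X+Y)" unfolding hermitian_def
  proof (intro allI)
    fix i j
    have "X$i$j = cnj (X$j$i)" "Y$i$j = cnj (Y$j$i)" using hX hY unfolding hermitian_def by blast+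
    then show "(X+Y)$i$j = cnj ((X+Y)$j$i)" by (simp del: complex_cnj_add add: complex_cnj_add[symmetric])
  qed
  have "0 \<le> Re (\<Sum>i\<in>UNIV. \<Sum>j\<in>UNIV. cnj (x$i) * (X+Y)$i$j * x$j)" for x
  proof -
    have "(\<Sum>i\<in>UNIV. \<Sum>j\<in>UNIV. cnj (x$i) * (X+Y)$i$j * x$j)
      = (\<Sum>i\<in>UNIV. \<Sum>j\<in>UNIV. cnj (x$i) * X$i$j * x$j) + (\<Sum>i\<in>UNIV. \<Sum>j\<in>UNIV. cnj (x$i) * Y$i$j * x$j)"
    proof -
      have "cnj (x$i) * (X+Y)$i$j * x$j = cnj (x$i) * X$i$j * x$j + cnj (x$i) * Y$i$j * x$j" for i j
        by (simp add: distrib_left distrib_right)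
      then show ?thesis by (simp add: sum.distrib)
    qed
    moreover have "0 \<le> Re (\<Sum>i\<in>UNIV. \<Sum>j\<in>UNIV. cnj (x$i) * X$i$j * x$j)"
      using assms(1) unfolding psd_def by blast
    moreover have "0 \<le> Re (\<Sum>i\<in>UNIV. \<Sum>j\<in>UNIV. cnj (x$i) * Y$i$j * x$j)"
      using assms(2) unfolding psd_def by blast
    ultimately show ?thesis by simp
  qed
  then show ?thesis using h by (simp add: psd_def)
qed

lemma psd_scale: assumes "psd (X::'d::finite op)" "0 \<le> c" shows "psd (c *\<^sub>R X)"
proof -
  have hX: "hermitian X" using assms unfolding psd_def by blast
  have h: "hermitian (c *\<^sub>R X)" unfolding hermitian_def
  proof (intro allI)
    fix i j
    have "(c *\<^sub>R X)$i$j = of_real c * X$i$j" by (simp add: scaleR_conv_of_real[where 'a=complex])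
    moreover have "(c *\<^sub>R X)$j$i = of_real c * X$j$i" by (simp add: scaleR_conv_of_real[where 'a=complex])
    moreover have "X$i$j = cnj (X$j$i)" using hX unfolding hermitian_def by blast
    ultimately show "(c *\<^sub>R X)$i$j = cnj ((c *\<^sub>R X)$j$i)" by simp
  qed
  have "0 \<le> Re (\<Sum>i\<in>UNIV. \<Sum>j\<in>UNIV. cnj (x$i) * (c *\<^sub>R X)$i$j * x$j)" for x
  proof -
    have "(\<Sum>i\<in>UNIV. \<Sum>j\<in>UNIV. cnj (x$i) * (c *\<^sub>R X)$i$j * x$j)
      = of_real c * (\<Sum>i\<in>UNIV. \<Sum>j\<in>UNIV. cnj (x$i) * X$i$j * x$j)"
    proof -
      have "cnj (x$i) * (c *\<^sub>R X)$i$j * x$j = of_real c * (cnj (x$i) * X$i$j * x$j)" for i j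
        by (simp add: scaleR_conv_of_real[where 'a=complex])
      then show ?thesis by (simp add: sum_distrib_left)
    qed
    moreover have "0 \<le> Re (\<Sum>i\<in>UNIV. \<Sum>j\<in>UNIV. cnj (x$i) * X$i$j * x$j)"
      using assms(1) unfolding psd_def by blast
    ultimately show ?thesis using assms(2) by simp
  qed
  then show ?thesis using h by (simp add: psd_def)
qed

lemma psd_zero: "psd (0::'d::finite op)"
  by (simp add: psd_def hermitian_def)

lemma psd_sum: "(\<And>k. k \<in> S \<Longrightarrow> psd (f k)) \<Longrightarrow> psd (sum f S :: 'd::finite op)"
proof (induction S rule: infinite_finite_induct)
  case (infinite A) then show ?case by (simp add: psd_zero)
next
  case empty then show ?case by (simp add: psd_zero)
next
  case (insert x F) then show ?case by (simp add: psd_add)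
qed

lemma antipodal_linear: "linear (antipodal :: 'd::finite op \<Rightarrow> 'd op)"
proof -
  have t: "trace (c *\<^sub>R X) = of_real c * trace X" for c and X :: "'d op"
    unfolding trace_def by (simp add: sum_distrib_left) (simp add: scaleR_conv_of_real)
  have m: "mat (a + b) = (mat a + mat b :: 'd op)" for a b
    by (simp add: mat_def vec_eq_iff)
  have ms: "mat (of_real c * a) = (c *\<^sub>R mat a :: 'd op)" for a c
    by (simp add: mat_def vec_eq_iff scaleR_conv_of_real[where 'a=complex])
  show ?thesis
    apply (rule linearI)
    apply (simp add: antipodal_def trace_add add_divide_distrib distrib_left m)
    apply (simp add: antipodal_def t ms[symmetric] scaleR_diff_right mult.left_commute)
    done
qed

lemma antipodal_unbiased:
  assumes "unbiased B" shows "antipodal (B 0) = (B 1 :: 'd::finite op)"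
proof -
  obtain V where V: "hermitian V" "trace V = 0" "B 0 = mat (1/2) + V" "B 1 = mat (1/2) - V"
    using assms unfolding unbiased_def by blast
  have "trace (mat (1/2) :: 'd op) = of_nat CARD('d) / 2"
    by (simp add: trace_def mat_def)
  then have "trace (B 0) = of_nat CARD('d) / 2" using V by (simp add: trace_add)
  then have "2 * trace (B 0) / of_nat CARD('d) = 1" by (simp add: mult.commute)
  then have "antipodal (B 0) = mat 1 - (mat (1/2) + V)" using V by (simp add: antipodal_def)
  also have "\<dots> = mat (1/2) - V"
    by (simp add: mat_def vec_eq_iff)
  finally show ?thesis using V by simp
qed

lemma antipodal_unbiased2:
  assumes "unbiased B" shows "antipodal (B 1) = (B 0 :: 'd::finite op)"
proof -
  obtain V where V: "hermitian V" "trace V = 0" "B 0 = mat (1/2) + V" "B 1 = mat (1/2) - V"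
    using assms unfolding unbiased_def by blast
  have "trace (mat (1/2) :: 'd op) = of_nat CARD('d) / 2"
    by (simp add: trace_def mat_def)
  then have "trace (B 1) = of_nat CARD('d) / 2" using V by (simp add: trace_sub)
  then have "2 * trace (B 1) / of_nat CARD('d) = 1" by (simp add: mult.commute)
  then have "antipodal (B 1) = mat 1 - (mat (1/2) - V)" using V by (simp add: antipodal_def)
  also have "\<dots> = mat (1/2) + V"
    by (simp add: mat_def vec_eq_iff)
  finally show ?thesis using V by simp
qed

lemma rowsum: "(\<Sum>b\<in>S. (x * f b) *\<^sub>R (U::'a::real_vector) + (y * g b) *\<^sub>R W)
   = (x * sum f S) *\<^sub>R U + (y * sum g S) *\<^sub>R W"
  by (simp add: sum.distrib scaleR_sum_left sum_distrib_left)

lemma colsum: "(\<Sum>a\<in>S. (x * f a * y) *\<^sub>R (U::'a::real_vector) + (z * g a * w) *\<^sub>R W)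
   = (x * sum f S * y) *\<^sub>R U + (z * sum g S * w) *\<^sub>R W"
  by (simp add: sum.distrib scaleR_sum_left sum_distrib_left sum_distrib_right)

theorem proposition3:
  fixes A :: "nat \<Rightarrow> complex^'d^'d" and n :: nat
  assumes "povm n A"
    and "simulable unbiased_povms n A"
  shows "(\<forall>i<n. psd (antipodal (A i))) \<and>
         povm n (\<lambda>i. antipodal (A i)) \<and>
         jointly_measurable n A n (\<lambda>i. antipodal (A i))"
proof -
  obtain m :: nat and p :: "nat \<Rightarrow> real" and N :: "nat \<Rightarrow> nat" and B :: "nat \<Rightarrow> nat \<Rightarrow> 'd op"
    and q :: "nat \<Rightarrow> nat \<Rightarrow> nat \<Rightarrow> real" where
    hB: "\<forall>j<m. (N j, B j) \<in> unbiased_povms" and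
    hp: "\<forall>j<m. 0 \<le> p j" and
    hq: "\<forall>j<m. \<forall>i'<N j. (\<forall>i<n. 0 \<le> q j i' i) \<and> (\<Sum>i<n. q j i' i) = 1" and
    hA: "\<forall>i<n. A i = (\<Sum>j<m. p j *\<^sub>R (\<Sum>i'<N j. q j i' i *\<^sub>R B j i'))"
    using assms(2) unfolding simulable_def
    by (elim exE conjE) (rule that; assumption)
  have N2: "N j = 2" and ub: "unbiased (B j)" if "j < m" for j
    using hB that unfolding unbiased_povms_def by auto
  have psdB0: "psd (B j 0)" and psdB1: "psd (B j 1)" if "j < m" for j
    using ub[OF that] unfolding unbiased_def povm_def by auto
  have q0: "\<forall>i<n. 0 \<le> q j 0 i" "(\<Sum>i<n. q j 0 i) = 1"
    and q1: "\<forall>i<n. 0 \<le> q j 1 i" "(\<Sum>i<n. q j 1 i) = 1" if "j < m" for j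
    using hq that N2[OF that] by auto
  have Aeq: "A a = (\<Sum>j<m. (p j * q j 0 a) *\<^sub>R B j 0 + (p j * q j 1 a) *\<^sub>R B j 1)"
    if "a < n" for a
    using hA that by (auto intro!: sum.cong simp: N2 numeral_2_eq_2 scaleR_add_right)
  have lin: "linear (antipodal :: 'd op \<Rightarrow> 'd op)" by (rule antipodal_linear)
  have Abar: "antipodal (A b) = (\<Sum>j<m. (p j * q j 1 b) *\<^sub>R B j 0 + (p j * q j 0 b) *\<^sub>R B j 1)"
    if "b < n" for b
  proof -
    have "antipodal (A b) = (\<Sum>j<m. antipodal ((p j * q j 0 b) *\<^sub>R B j 0 + (p j * q j 1 b) *\<^sub>R B j 1))"
      using Aeq[OF that] by (simp add: linear_sum[OF lin] o_def)
    also have "\<dots> = (\<Sum>j<m. (p j * q j 1 b) *\<^sub>R B j 0 + (p j * q j 0 b) *\<^sub>R B j 1)"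
    proof (rule sum.cong)
      fix j assume "j \<in> {..<m}"
      then have u: "unbiased (B j)" using ub by simp
      show "antipodal ((p j * q j 0 b) *\<^sub>R B j 0 + (p j * q j 1 b) *\<^sub>R B j 1) =
        (p j * q j 1 b) *\<^sub>R B j 0 + (p j * q j 0 b) *\<^sub>R B j 1"
        using antipodal_unbiased[OF u] antipodal_unbiased2[OF u]
        by (simp add: linear_add[OF lin] linear_scale[OF lin])
    qed simp
    finally show ?thesis .
  qed
  define M where "M a b = (\<Sum>j<m. (p j * q j 0 a * q j 1 b) *\<^sub>R B j 0 + (p j * q j 1 a * q j 0 b) *\<^sub>R B j 1)" for a b
  have Mpsd: "psd (M a b)" if "a < n" "b < n" for a b
    unfolding M_def
    using that hp q0 q1 psdB0 psdB1
    by (intro psd_sum psd_add psd_scale) auto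
  have row: "(\<Sum>b<n. M a b) = A a" if "a < n" for a
  proof -
    have "(\<Sum>b<n. M a b) = (\<Sum>j<m. \<Sum>b<n. (p j * q j 0 a * q j 1 b) *\<^sub>R B j 0 + (p j * q j 1 a * q j 0 b) *\<^sub>R B j 1)"
      unfolding M_def by (rule sum.swap)
    also have "\<dots> = (\<Sum>j<m. (p j * q j 0 a) *\<^sub>R B j 0 + (p j * q j 1 a) *\<^sub>R B j 1)"
      by (rule sum.cong) (auto simp: rowsum q0 q1 q1[unfolded One_nat_def])
    finally show ?thesis using Aeq[OF that] by simp
  qed
  have col: "(\<Sum>a<n. M a b) = antipodal (A b)" if "b < n" for b
  proof -
    have "(\<Sum>a<n. M a b) = (\<Sum>j<m. \<Sum>a<n. (p j * q j 0 a * q j 1 b) *\<^sub>R B j 0 + (p j * q j 1 a * q j 0 b) *\<^sub>R B j 1)"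
      unfolding M_def by (rule sum.swap)
    also have "\<dots> = (\<Sum>j<m. (p j * q j 1 b) *\<^sub>R B j 0 + (p j * q j 0 b) *\<^sub>R B j 1)"
      by (rule sum.cong) (auto simp: colsum q0 q1 q1[unfolded One_nat_def])
    finally show ?thesis using Abar[OF that] by simp
  qed
  have tot: "(\<Sum>a<n. \<Sum>b<n. M a b) = mat 1"
    using row assms(1) unfolding povm_def by simp
  have psdbar: "\<forall>i<n. psd (antipodal (A i))"
    using col Mpsd by (metis psd_sum lessThan_iff)
  have "(\<Sum>b<n. antipodal (A b)) = mat 1"
  proof -
    have "(\<Sum>b<n. antipodal (A b)) = (\<Sum>b<n. \<Sum>a<n. M a b)" using col by simp
    also have "\<dots> = (\<Sum>a<n. \<Sum>b<n. M a b)" by (rule sum.swap)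
    finally show ?thesis using tot by simp
  qed
  then have "povm n (\<lambda>i. antipodal (A i))" using psdbar unfolding povm_def by simp
  moreover have "jointly_measurable n A n (\<lambda>i. antipodal (A i))"
    unfolding jointly_measurable_def using Mpsd tot row col by (intro exI[of _ M]) auto
  ultimately show ?thesis using psdbar by blast
qed

end
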